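(* Let $\vec{k}=(k_1,\dots,k_\ell)$ be any vector of positive integers and let $\mathcal{K}$ be the set of all distinct rearrangements of $\vec k$. Then $$\widetilde{C}_{\mathcal{K}}(q,t)=\sum_{\pi\in\mathcal{D}_{\mathcal{K}}} q^{\mathrm{area}(\pi)}t^{\mathrm{depth}(\pi)}$$ is $q,t$-symmetric, i.e. $\widetilde{C}_{\mathcal{K}}(q,t)=\widetilde{C}_{\mathcal{K}}(t,q)$, where $\mathcal{D}_{\mathcal{K}}$ is the union of $\mathcal{D}_{\vec u}$ over $\vec u\in\mathcal{K}$.
   Context: For a vector $\vec{u}=(u_1,\dots,u_m)$ of positive integers put $|\vec u|=u_1+\cdots+u_m$ and $N=|\vec u|+m$. A $\vec u$-Dyck path is a word $\pi=\pi_1\cdots\pi_N$ containing the letters $S^{u_1},\dots,S^{u_m}$ exactly once each and in this order, together with $|\vec u|$ letters $W$, such that all starting ranks are nonnegative, where $r_1=0$, $r_{i+1}=r_i+u_j$ if $\pi_i=S^{u_j}$ and $r_{i+1}=r_i-1$ if $\pi_i=W$. $\mathcal{D}_{\vec u}$ is the set of such paths. The area sequence is $(a_1,\dots,a_m)$ with $a_j$ the starting rank of $S^{u_j}$, and $\mathrm{area}(\pi)=\sum a_j$. Filling algorithm $\eta_*$: in a tableau of $m$ top-justified columns, column $i$ having $u_i+1$ cells, place $1$ at the top of column 1; for $i=2,\dots,N$, call an entry active if it is currently the bottom entry of a column $i'$ not yet containing $u_{i'}+1$ entries; if $\pi_i=W$ place $i$ immediately below the largest active entry, otherwise place $i$ at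 the top of the first empty column. Ranking algorithm $\gamma_*$: column 1 gets ranks $0,1,\dots,u_1$ top to bottom; for $i\ge2$, if the top entry of column $i$ of $\eta_*(\pi)$ is $A+1$ and $A$ has rank $\alpha$, column $i$ gets ranks $\alpha,\dots,\alpha+u_i$ top to bottom. The depth labeling sequence $(d_1,\dots,d_m)$ is the first row of the ranking tableau and $\mathrm{depth}(\pi)=\sum d_j$. *)

theory Defs
  imports Main "HOL-Library.Multiset"
begin

text \<open>A \<open>u\<close>-Dyck path is a word over \<open>S\<close>/\<open>W\<close>; the j-th
  occurrence of \<open>S\<close> stands for the letter \<open>S^{u_j}\<close> (these letters occur exactly
  once each and in order, so the exponent is determined by the position).\<close>
datatype letter = S | W

fun start_ranks :: "int \<Rightarrow> nat list \<Rightarrow> letter list \<Rightarrow> int list" where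
  "start_ranks r us [] = []"
| "start_ranks r us (S # w) = r # start_ranks (r + int (hd us)) (tl us) w"
| "start_ranks r us (W # w) = r # start_ranks (r - 1) us w"

definition dyck_paths :: "nat list \<Rightarrow> letter list set" where
  "dyck_paths u = {w. length w = sum_list u + length u
      \<and> length (filter (\<lambda>l. l = S) w) = length u
      \<and> length (filter (\<lambda>l. l = W) w) = sum_list u
      \<and> (\<forall>r \<in> set (start_ranks 0 u w). 0 \<le> r)}"

definition area :: "nat list \<Rightarrow> letter list \<Rightarrow> nat" where
  "area u w = nat (sum_list [r. (r, l) \<leftarrow> zip (start_ranks 0 u w) w, l = S])"

text \<open>Filling algorithm \<open>\<eta>_*\<close>. The tableau is a list of \<open>m\<close> columns (0-indexed),
  each column the list of its entries from top to bottom.\<close>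
definition fill_step :: "nat list \<Rightarrow> nat \<times> letter \<Rightarrow> nat list list \<Rightarrow> nat list list" where
  "fill_step u il cols =
    (let i = fst il; l = snd il in
     if i = 1 then cols[0 := [1]]
     else (case l of
       W \<Rightarrow> (let act = {j. j < length u \<and> cols ! j \<noteq> [] \<and> length (cols ! j) < u ! j + 1};
                 mx = Max ((\<lambda>j. last (cols ! j)) ` act);
                 c = (LEAST j. j \<in> act \<and> last (cols ! j) = mx)
             in cols[c := cols ! c @ [i]])
     | S \<Rightarrow> (let c = (LEAST j. j < length u \<and> cols ! j = [])
             in cols[c := [i]])))"

definition eta :: "nat list \<Rightarrow> letter list \<Rightarrow> nat list list" where
  "eta u w = fold (fill_step u) (zip [1..<length w + 1] w) (replicate (length u) [])"

text \<open>Ranking algorithm \<open>\<gamma>_*\<close>: the top rank \<open>d_i\<close> of column \<open>i\<close>. The entry in row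
  \<open>p\<close> (0-indexed from the top) of column \<open>c\<close> has rank \<open>d_c + p\<close>.\<close>
definition depth_seq :: "nat list \<Rightarrow> letter list \<Rightarrow> nat list" where
  "depth_seq u w =
    (let cols = eta u w in
     fold (\<lambda>i ds. ds @ [if i = 0 then 0 else
              (let A = hd (cols ! i) - 1;
                   c = (LEAST c. c < length u \<and> A \<in> set (cols ! c));
                   p = (LEAST p. p < length (cols ! c) \<and> cols ! c ! p = A)
               in ds ! c + p)])
        [0..<length u] [])"

definition depth :: "nat list \<Rightarrow> letter list \<Rightarrow> nat" where
  "depth u w = sum_list (depth_seq u w)"

text \<open>\<open>\<widetilde>C_K(q,t)\<close> for \<open>K\<close> the set of distinct rearrangements of \<open>k\<close>; the
  union \<open>D_K\<close> is indexed by pairs \<open>(u, w)\<close> since the letters of a path carry the \<open>u_j\<close>.\<close>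
definition Ctilde :: "nat list \<Rightarrow> 'a::comm_ring_1 \<Rightarrow> 'a \<Rightarrow> 'a" where
  "Ctilde k q t = (\<Sum>u \<in> {u. mset u = mset k}. \<Sum>w \<in> dyck_paths u. q ^ area u w * t ^ depth u w)"

end

theory Submission
  imports Defs
begin

datatype tr = Lf | Nd nat tr "tr list"

lemma tr_mut_induct:
  assumes "P Lf" "\<And>u t0 ts. P t0 \<Longrightarrow> Q ts \<Longrightarrow> P (Nd u t0 ts)" "Q []"
    "\<And>t ts. P t \<Longrightarrow> Q ts \<Longrightarrow> Q (t # ts)"
  shows "P t &&& Q ts"
proof -
  have pt: "P t" for t
  proof (induction t)
    case Lf then show ?case using assms(1) .
  next
    case (Nd u t0 ts)
    have "Q ts" using Nd(2) by (induction ts) (auto intro: assms(3,4))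
    then show ?case using Nd(1) assms(2) by blast
  qed
  have "Q ts" by (induction ts) (auto intro: assms(3,4) pt)
  then show "Q ts" .
  show "P t" by (rule pt)
qed

primrec wd :: "tr \<Rightarrow> letter list" and wdl :: "tr list \<Rightarrow> letter list" where
  "wd Lf = []"
| "wd (Nd u t0 ts) = S # wd t0 @ wdl ts"
| "wdl [] = []"
| "wdl (t # ts) = W # wd t @ wdl ts"

primrec lab :: "tr \<Rightarrow> nat list" and labl :: "tr list \<Rightarrow> nat list" where
  "lab Lf = []"
| "lab (Nd u t0 ts) = u # lab t0 @ labl ts"
| "labl [] = []"
| "labl (t # ts) = lab t @ labl ts"

primrec wft :: "tr \<Rightarrow> bool" and wfl :: "tr list \<Rightarrow> bool" where
  "wft Lf = True"
| "wft (Nd u t0 ts) = (length ts = u \<and> wft t0 \<and> wfl ts)"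
| "wfl [] = True"
| "wfl (t # ts) = (wft t \<and> wfl ts)"

primrec At :: "int \<Rightarrow> tr \<Rightarrow> int" and Al :: "int \<Rightarrow> tr list \<Rightarrow> int" where
  "At r Lf = 0"
| "At r (Nd u t0 ts) = r + At (r + int u) t0 + Al (r + int u) ts"
| "Al r [] = 0"
| "Al r (t # ts) = At (r - 1) t + Al (r - 1) ts"

primrec dT :: "nat \<Rightarrow> tr \<Rightarrow> nat list" and dL :: "nat \<Rightarrow> tr list \<Rightarrow> nat list" where
  "dT d Lf = []"
| "dT d (Nd u t0 ts) = d # dT d t0 @ dL (Suc d) ts"
| "dL d [] = []"
| "dL d (t # ts) = dT d t @ dL (Suc d) ts"

primrec colsT :: "nat \<Rightarrow> tr \<Rightarrow> nat list list" and colsL :: "nat \<Rightarrow> tr list \<Rightarrow> nat list \<times> nat list list" where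
  "colsT e Lf = []"
| "colsT e (Nd u t0 ts) = (e # fst (colsL (e + 1 + length (wd t0)) ts)) # colsT (Suc e) t0 @ snd (colsL (e + 1 + length (wd t0)) ts)"
| "colsL e [] = ([], [])"
| "colsL e (t # ts) = (e # fst (colsL (e + 1 + length (wd t)) ts), colsT (Suc e) t @ snd (colsL (e + 1 + length (wd t)) ts))"

primrec rfl :: "tr \<Rightarrow> tr" where
  "rfl Lf = Lf"
| "rfl (Nd u t0 ts) = Nd u (hd (rev (rfl t0 # map rfl ts))) (tl (rev (rfl t0 # map rfl ts)))"

fun fin :: "int \<Rightarrow> nat list \<Rightarrow> letter list \<Rightarrow> int" where
  "fin r us [] = r"
| "fin r us (S # w) = fin (r + int (hd us)) (tl us) w"
| "fin r us (W # w) = fin (r - 1) us w"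

fun Sa :: "int \<Rightarrow> nat list \<Rightarrow> letter list \<Rightarrow> int" where
  "Sa r us [] = 0"
| "Sa r us (S # w) = r + Sa (r + int (hd us)) (tl us) w"
| "Sa r us (W # w) = Sa (r - 1) us w"

abbreviation cS :: "letter list \<Rightarrow> nat" where "cS w \<equiv> length (filter (\<lambda>l. l = S) w)"
abbreviation cW :: "letter list \<Rightarrow> nat" where "cW w \<equiv> length (filter (\<lambda>l. l = W) w)"

lemma sr_append: "start_ranks r us (w1 @ w2) = start_ranks r us w1 @ start_ranks (fin r us w1) (drop (cS w1) us) w2"
  by (induction r us w1 rule: fin.induct) (auto simp: drop_Suc)

lemma fin_append: "fin r us (w1 @ w2) = fin (fin r us w1) (drop (cS w1) us) w2"
  by (induction r us w1 rule: fin.induct) (auto simp: drop_Suc)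

lemma Sa_append: "Sa r us (w1 @ w2) = Sa r us w1 + Sa (fin r us w1) (drop (cS w1) us) w2"
  by (induction r us w1 rule: fin.induct) (auto simp: drop_Suc)

lemma Sa_eq: "sum_list [r. (r, l) \<leftarrow> zip (start_ranks r0 us w) w, l = S] = Sa r0 us w"
  by (induction r0 us w rule: fin.induct) auto

lemma sr_nth: "i < length w \<Longrightarrow> start_ranks r us w ! i = fin r us (take i w)"
proof (induction r us w arbitrary: i rule: fin.induct)
  case (2 r us w) then show ?case by (cases i) auto
next
  case (3 r us w) then show ?case by (cases i) auto
qed auto

lemma length_sr[simp]: "length (start_ranks r us w) = length w"
  by (induction r us w rule: fin.induct) auto

lemma cS_wd: "cS (wd t) = length (lab t)" "cS (wdl ts) = length (labl ts)"
  by (induct t and ts rule: tr_mut_induct) auto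

lemma cW_wd: "(wft t \<longrightarrow> cW (wd t) = sum_list (lab t))" "(wfl ts \<longrightarrow> cW (wdl ts) = sum_list (labl ts) + length ts)"
  by (induct t and ts rule: tr_mut_induct) auto

lemma rank_tree:
  "(\<forall>r us. wft t \<longrightarrow> (\<forall>x\<in>set (start_ranks r (lab t @ us) (wd t)). r \<le> x) \<and> fin r (lab t @ us) (wd t) = r
       \<and> Sa r (lab t @ us) (wd t) = At r t)"
 "(\<forall>r us. wfl ts \<longrightarrow> (\<forall>x\<in>set (start_ranks r (labl ts @ us) (wdl ts)). r - int (length ts) \<le> x)
       \<and> fin r (labl ts @ us) (wdl ts) = r - int (length ts) \<and> Sa r (labl ts @ us) (wdl ts) = Al r ts)"
proof (induct t and ts rule: tr_mut_induct)
  case (2 u t0 ts)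
  show ?case
  proof (intro allI impI)
    fix r us assume wf: "wft (Nd u t0 ts)"
    have l: "length ts = u" using wf by simp
    let ?us = "lab t0 @ labl ts @ us"
    have A: "(\<forall>x\<in>set (start_ranks (r + int u) ?us (wd t0)). r + int u \<le> x) \<and> fin (r + int u) ?us (wd t0) = r + int u
       \<and> Sa (r + int u) ?us (wd t0) = At (r + int u) t0"
      using 2(1) wf by (meson wft.simps(2))
    have B: "(\<forall>x\<in>set (start_ranks (r + int u) (labl ts @ us) (wdl ts)). r + int u - int (length ts) \<le> x)
       \<and> fin (r + int u) (labl ts @ us) (wdl ts) = r + int u - int (length ts) \<and> Sa (r + int u) (labl ts @ us) (wdl ts) = Al (r + int u) ts"
      using 2(2) wf by (meson wft.simps(2))
    have d: "drop (cS (wd t0)) ?us = labl ts @ us" using cS_wd by simp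
    show "(\<forall>x\<in>set (start_ranks r (lab (Nd u t0 ts) @ us) (wd (Nd u t0 ts))). r \<le> x) \<and>
          fin r (lab (Nd u t0 ts) @ us) (wd (Nd u t0 ts)) = r \<and> Sa r (lab (Nd u t0 ts) @ us) (wd (Nd u t0 ts)) = At r (Nd u t0 ts)"
      using A B l by (auto simp: sr_append fin_append Sa_append cS_wd)
  qed
next
  case (4 t ts)
  show ?case
  proof (intro allI impI)
    fix r us assume wf: "wfl (t # ts)"
    let ?us = "lab t @ labl ts @ us"
    have A: "(\<forall>x\<in>set (start_ranks (r - 1) ?us (wd t)). r - 1 \<le> x) \<and> fin (r - 1) ?us (wd t) = r - 1
       \<and> Sa (r - 1) ?us (wd t) = At (r - 1) t"
      using 4(1) wf by (meson wfl.simps(2))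
    have B: "(\<forall>x\<in>set (start_ranks (r - 1) (labl ts @ us) (wdl ts)). r - 1 - int (length ts) \<le> x)
       \<and> fin (r - 1) (labl ts @ us) (wdl ts) = r - 1 - int (length ts) \<and> Sa (r - 1) (labl ts @ us) (wdl ts) = Al (r - 1) ts"
      using 4(2) wf by (meson wfl.simps(2))
    have d: "drop (cS (wd t)) ?us = labl ts @ us" using cS_wd by simp
    show "(\<forall>x\<in>set (start_ranks r (labl (t # ts) @ us) (wdl (t # ts))). r - int (length (t # ts)) \<le> x) \<and>
          fin r (labl (t # ts) @ us) (wdl (t # ts)) = r - int (length (t # ts)) \<and> Sa r (labl (t # ts) @ us) (wdl (t # ts)) = Al r (t # ts)"
      using A B by (auto simp: sr_append fin_append Sa_append cS_wd)
  qed
qed auto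

lemma sr_app_us: "cS w \<le> length us \<Longrightarrow> start_ranks r (us @ vs) w = start_ranks r us w"
proof (induction r us w rule: fin.induct)
  case (2 r us w) then show ?case by (cases us) auto
qed auto

lemma fin_app_us: "cS w \<le> length us \<Longrightarrow> fin r (us @ vs) w = fin r us w"
proof (induction r us w rule: fin.induct)
  case (2 r us w) then show ?case by (cases us) auto
qed auto

lemma slot_split:
  assumes IH: "\<forall>v' r us. length v' \<le> n \<longrightarrow> (\<forall>x\<in>set (start_ranks r us v'). r \<le> x) \<longrightarrow> fin r us v' = r
      \<longrightarrow> length us = cS v' \<longrightarrow> (\<exists>t. wft t \<and> lab t = us \<and> wd t = v')"
  shows "length v \<le> n \<Longrightarrow> (\<forall>x\<in>set (start_ranks \<rho> us v). \<rho> - int j \<le> x) \<Longrightarrow> fin \<rho> us v = \<rho> - int j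
      \<Longrightarrow> length us = cS v \<Longrightarrow> \<exists>t0 ts. length ts = j \<and> wft t0 \<and> wfl ts \<and> lab t0 @ labl ts = us \<and> wd t0 @ wdl ts = v"
proof (induction j arbitrary: v \<rho> us)
  case 0
  then obtain t where "wft t" "lab t = us" "wd t = v" using IH by (metis diff_zero of_nat_0)
  then show ?case by (intro exI[of _ t] exI[of _ "[]"]) auto
next
  case (Suc j)
  define P where "P = (\<lambda>k. fin \<rho> us (take k v) < \<rho>)"
  have Pl: "P (length v)" using Suc.prems by (simp add: P_def)
  define k where "k = (LEAST k. P k)"
  have Pk: "P k" unfolding k_def by (rule LeastI[of P, OF Pl])
  have kle: "k \<le> length v" unfolding k_def by (rule Least_le[of P, OF Pl])
  have notP: "\<And>i. i < k \<Longrightarrow> \<not> P i" unfolding k_def by (rule not_less_Least)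
  have k0: "k \<noteq> 0" using Pk by (cases k) (auto simp: P_def)
  define k' where "k' = k - 1"
  have kk: "k = Suc k'" using k0 k'_def by simp
  have k'l: "k' < length v" using kle kk by simp
  have tk: "take k v = take k' v @ [v ! k']" using k'l kk by (simp add: take_Suc_conv_app_nth)
  have f1: "fin \<rho> us (take k' v) \<ge> \<rho>" using notP[of k'] kk by (simp add: P_def)
  have vW: "v ! k' = W"
  proof (cases "v ! k'")
    case S
    then have "fin \<rho> us (take k v) \<ge> fin \<rho> us (take k' v)" using tk by (simp add: fin_append)
    then show ?thesis using f1 Pk by (simp add: P_def)
  qed simp
  have f2: "fin \<rho> us (take k' v) = \<rho>" using Pk f1 tk vW by (simp add: P_def fin_append)
  define v1 where "v1 = take k' v"
  define v2 where "v2 = drop k v"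
  have vsplit: "v = v1 @ W # v2"
    unfolding v1_def v2_def using tk vW
    by (metis append.assoc append_Cons append_take_drop_id self_append_conv2)
  define us1 where "us1 = take (cS v1) us"
  define us2 where "us2 = drop (cS v1) us"
  have cs1: "cS v1 \<le> length us" using Suc.prems(4) vsplit by simp
  have lus1: "length us1 = cS v1" using cs1 us1_def by simp
  have us12: "us = us1 @ us2" by (simp add: us1_def us2_def)
  have srv: "start_ranks \<rho> us v = start_ranks \<rho> us v1 @ \<rho> # start_ranks (\<rho> - 1) us2 v2"
    using vsplit f2 sr_append[of \<rho> us v1 "W # v2"] by (simp add: v1_def us2_def)
  have r1: "\<forall>x\<in>set (start_ranks \<rho> us1 v1). \<rho> \<le> x"
  proof
    fix x assume "x \<in> set (start_ranks \<rho> us1 v1)"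
    then obtain i where i: "i < length v1" "x = start_ranks \<rho> us1 v1 ! i"
      by (auto simp: in_set_conv_nth)
    have "x = start_ranks \<rho> us v1 ! i" using i sr_app_us[of v1 us1 \<rho> us2] lus1 us12 by simp
    also have "\<dots> = fin \<rho> us (take i v)" using i by (simp add: sr_nth v1_def)
    finally show "\<rho> \<le> x" using notP[of i] i kk by (simp add: P_def v1_def)
  qed
  have fv1: "fin \<rho> us1 v1 = \<rho>" using fin_app_us[of v1 us1 \<rho> us2] lus1 us12 f2 v1_def by simp
  obtain t0 where t0: "wft t0" "lab t0 = us1" "wd t0 = v1"
  proof -
    have "length v1 \<le> n" using Suc.prems(1) vsplit by simp
    then show ?thesis using IH r1 fv1 lus1 that by blast
  qed
  have r2: "\<forall>x\<in>set (start_ranks (\<rho> - 1) us2 v2). \<rho> - 1 - int j \<le> x"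
  proof
    fix x assume "x \<in> set (start_ranks (\<rho> - 1) us2 v2)"
    then have "x \<in> set (start_ranks \<rho> us v)" unfolding srv by simp
    then have "\<rho> - int (Suc j) \<le> x" by (rule bspec[OF Suc.prems(2)])
    then show "\<rho> - 1 - int j \<le> x" by linarith
  qed
  have fv2: "fin (\<rho> - 1) us2 v2 = \<rho> - 1 - int j"
  proof -
    have "fin \<rho> us (v1 @ W # v2) = fin (fin \<rho> us v1 - 1) (drop (cS v1) us) v2" by (simp add: fin_append)
    moreover have "fin \<rho> us v1 = \<rho>" using f2 by (simp add: v1_def)
    ultimately show ?thesis using Suc.prems(3) vsplit by (simp add: us2_def)
  qed
  have lus2: "length us2 = cS v2" using Suc.prems(4) vsplit by (simp add: us2_def)
  obtain t1 ts where t1: "length ts = j" "wft t1" "wfl ts" "lab t1 @ labl ts = us2" "wd t1 @ wdl ts = v2"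
    using Suc.IH[OF _ r2 fv2 lus2] Suc.prems(1) vsplit by fastforce
  show ?case using t0 t1 us12 vsplit
    by (intro exI[of _ t0] exI[of _ "t1 # ts"]) auto
qed

lemma surj_tree:
  "(\<forall>x\<in>set (start_ranks r us w). r \<le> x) \<Longrightarrow> fin r us w = r \<Longrightarrow> length us = cS w
     \<Longrightarrow> \<exists>t. wft t \<and> lab t = us \<and> wd t = w"
proof (induction "length w" arbitrary: w r us rule: less_induct)
  case less
  show ?case
  proof (cases w)
    case Nil
    then show ?thesis using less.prems by (intro exI[of _ Lf]) auto
  next
    case (Cons l v)
    show ?thesis
    proof (cases l)
      case W
      show ?thesis
      proof (cases v)
        case Nil then show ?thesis using less.prems Cons W by simp
      next
        case (Cons l' v')
        then show ?thesis using less.prems \<open>w = l # v\<close> W by (cases l') auto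
      qed
    next
      case S
      obtain u us' where us: "us = u # us'" using less.prems(3) Cons S by (cases us) auto
      have IH: "\<forall>v' r us. length v' \<le> length v \<longrightarrow> (\<forall>x\<in>set (start_ranks r us v'). r \<le> x) \<longrightarrow> fin r us v' = r
        \<longrightarrow> length us = cS v' \<longrightarrow> (\<exists>t. wft t \<and> lab t = us \<and> wd t = v')"
        using less.hyps Cons by (simp add: le_imp_less_Suc)
      have a: "\<forall>x\<in>set (start_ranks (r + int u) us' v). r + int u - int u \<le> x" using less.prems Cons S us by auto
      have b: "fin (r + int u) us' v = r + int u - int u" using less.prems Cons S us by auto
      have c: "length us' = cS v" using less.prems Cons S us by auto
      obtain t0 ts where "length ts = u" "wft t0" "wfl ts" "lab t0 @ labl ts = us'" "wd t0 @ wdl ts = v"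
        using slot_split[of "length v", OF IH, OF order.refl a b c] by blast
      then show ?thesis using Cons S us by (intro exI[of _ "Nd u t0 ts"]) auto
    qed
  qed
qed


lemma wfl_all: "wfl ts = (\<forall>t\<in>set ts. wft t)"
  by (induction ts) auto

lemma labl_concat: "labl ts = concat (map lab ts)"
  by (induction ts) auto

lemma rfl_Nd: "rfl (Nd u t0 ts) = Nd u (hd (rev (map rfl (t0 # ts)))) (tl (rev (map rfl (t0 # ts))))"
  by (simp only: rfl.simps list.map)

declare rfl.simps(2)[simp del]

lemma rfl_rfl: "rfl (rfl t) = t"
proof (induction t)
  case (Nd u t0 ts)
  define l where "l = rev (map rfl (t0 # ts))"
  have ne: "l \<noteq> []" by (simp add: l_def)
  have "rfl (rfl (Nd u t0 ts)) = rfl (Nd u (hd l) (tl l))" by (simp add: rfl_Nd l_def)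
  also have "\<dots> = Nd u (hd (rev (map rfl l))) (tl (rev (map rfl l)))"
    using ne by (subst rfl_Nd) simp
  also have "rev (map rfl l) = t0 # ts"
  proof -
    have m: "map (\<lambda>x. rfl (rfl x)) ts = ts" by (rule map_idI) (rule Nd.IH(2))
    show ?thesis unfolding l_def using Nd.IH(1) m by (simp add: rev_map comp_def)
  qed
  finally show ?case by simp
qed simp

lemma rfl_Nd': "\<exists>a list. rev (map rfl (t0 # ts)) = a # list \<and> rfl (Nd u t0 ts) = Nd u a list"
proof -
  obtain a list where "rev (map rfl (t0 # ts)) = a # list" by (cases "rev (map rfl (t0 # ts))") auto
  then show ?thesis by (auto simp: rfl_Nd)
qed

lemma wft_rfl: "wft t \<Longrightarrow> wft (rfl t)"
proof (induction t)
  case (Nd u t0 ts)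
  obtain a list where al: "rev (map rfl (t0 # ts)) = a # list" "rfl (Nd u t0 ts) = Nd u a list"
    using rfl_Nd' by blast
  have "\<forall>x\<in>set (a # list). wft x" unfolding al(1)[symmetric] using Nd by (auto simp: wfl_all)
  moreover have "length list = u" using Nd.prems arg_cong[OF al(1), of length] by simp
  ultimately show ?case using al(2) by (simp add: wfl_all)
qed simp

lemma mset_concat_rev: "mset (concat (rev xs)) = mset (concat xs)"
  by (induction xs) auto

lemma mset_concat_map_cong: "(\<And>x. x \<in> set xs \<Longrightarrow> mset (f x) = mset (g x)) \<Longrightarrow> mset (concat (map f xs)) = mset (concat (map g xs))"
  by (induction xs) auto

lemma lab_Nd: "lab (Nd u t0 ts) = u # concat (map lab (t0 # ts))"
  by (simp add: labl_concat)

lemma mset_lab_rfl: "mset (lab (rfl t)) = mset (lab t)"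
proof (induction t)
  case (Nd u t0 ts)
  obtain a list where al: "rev (map rfl (t0 # ts)) = a # list" "rfl (Nd u t0 ts) = Nd u a list"
    using rfl_Nd' by blast
  have "lab (rfl (Nd u t0 ts)) = u # concat (map lab (rev (map rfl (t0 # ts))))"
    unfolding al by (simp add: labl_concat)
  also have "mset \<dots> = add_mset u (mset (concat (map lab (map rfl (t0 # ts)))))"
    by (simp only: rev_map[symmetric] mset_concat_rev mset.simps)
  also have "\<dots> = add_mset u (mset (concat (map lab (t0 # ts))))"
    using Nd by (simp only: map_map) (subst mset_concat_map_cong[where g = lab], auto)
  finally show ?case by (simp only: lab_Nd mset.simps)
qed simp

definition Dn :: "nat \<Rightarrow> tr \<Rightarrow> nat" where "Dn d t = sum_list (dT d t)"

lemma dL_sum: "sum_list (dL d ts) = (\<Sum>p<length ts. Dn (d + p) (ts ! p))"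
proof (induction ts arbitrary: d)
  case (Cons t ts)
  show ?case by (simp add: Cons Dn_def sum.lessThan_Suc_shift del: sum.lessThan_Suc)
qed simp

lemma Dn_Nd: "Dn d (Nd u t0 ts) = d + (\<Sum>p<Suc (length ts). Dn (d + p) ((t0 # ts) ! p))"
  by (simp add: Dn_def dL_sum sum.lessThan_Suc_shift del: sum.lessThan_Suc)

lemma Al_sum: "Al r ts = (\<Sum>p<length ts. At (r - 1 - int p) (ts ! p))"
proof (induction ts arbitrary: r)
  case (Cons t ts)
  show ?case by (simp add: Cons sum.lessThan_Suc_shift algebra_simps del: sum.lessThan_Suc)
qed simp

lemma At_Nd: "At r (Nd u t0 ts) = r + (\<Sum>p<Suc (length ts). At (r + int u - int p) ((t0 # ts) ! p))"
  by (simp add: Al_sum sum.lessThan_Suc_shift algebra_simps del: sum.lessThan_Suc)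

lemma At_rfl: "wft t \<Longrightarrow> At (int d) (rfl t) = int (Dn d t)"
proof (induction t arbitrary: d)
  case Lf then show ?case by (simp add: Dn_def)
next
  case (Nd u t0 ts)
  define l where "l = t0 # ts"
  define l' where "l' = rev (map rfl l)"
  have lu: "length ts = u" using Nd.prems by simp
  have ne: "l' \<noteq> []" by (simp add: l'_def l_def)
  have wl: "\<forall>x\<in>set l. wft x" using Nd.prems by (auto simp: l_def wfl_all)
  have IH: "\<And>x d. x \<in> set l \<Longrightarrow> At (int d) (rfl x) = int (Dn d x)"
    using Nd.IH wl by (auto simp: l_def)
  have r: "rfl (Nd u t0 ts) = Nd u (hd l') (tl l')" by (simp add: rfl_Nd l'_def l_def)
  have ll: "hd l' # tl l' = l'" using ne by simp
  have len: "length (tl l') = u" using lu by (simp add: l'_def l_def)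
  have "At (int d) (rfl (Nd u t0 ts)) = int d + (\<Sum>p<Suc u. At (int d + int u - int p) (l' ! p))"
    using r At_Nd[of "int d" u "hd l'" "tl l'"] len ll by simp
  also have "(\<Sum>p<Suc u. At (int d + int u - int p) (l' ! p)) = (\<Sum>p<Suc u. At (int (d + (Suc u - Suc p))) (rfl (l ! (Suc u - Suc p))))"
  proof (rule sum.cong)
    fix p assume "p \<in> {..<Suc u}"
    then have p: "p < Suc u" by simp
    have ll: "length l = Suc u" using lu by (simp add: l_def)
    have "l' ! p = rfl (l ! (Suc u - Suc p))" using p ll unfolding l'_def by (simp add: rev_nth)
    moreover have "int d + int u - int p = int (d + (Suc u - Suc p))" using p by simp
    ultimately show "At (int d + int u - int p) (l' ! p) = At (int (d + (Suc u - Suc p))) (rfl (l ! (Suc u - Suc p)))" by simp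
  qed simp
  also have "\<dots> = (\<Sum>q<Suc u. At (int (d + q)) (rfl (l ! q)))"
    by (rule sum.nat_diff_reindex[where g = "\<lambda>q. At (int (d + q)) (rfl (l ! q))"])
  also have "\<dots> = (\<Sum>q<Suc u. int (Dn (d + q) (l ! q)))"
  proof (rule sum.cong)
    fix q assume "q \<in> {..<Suc u}"
    then have "l ! q \<in> set l" using lu unfolding l_def by (intro nth_mem) simp
    then show "At (int (d + q)) (rfl (l ! q)) = int (Dn (d + q) (l ! q))" by (rule IH)
  qed simp
  finally show ?case using lu by (simp add: Dn_Nd l_def)
qed


declare mset_upt[simp del]

lemma len_colsT0: "\<forall>e. length (colsT e t) = length (lab t)" "\<forall>e. length (snd (colsL e ts)) = length (labl ts) \<and> length (fst (colsL e ts)) = length ts"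
  by (induct t and ts rule: tr_mut_induct) auto

lemma len_colsT: "length (colsT e t) = length (lab t)" "length (snd (colsL e ts)) = length (labl ts)" "length (fst (colsL e ts)) = length ts"
  using len_colsT0 by auto

lemma map_len_colsT0: "\<forall>e. wft t \<longrightarrow> map length (colsT e t) = map Suc (lab t)" "\<forall>e. wfl ts \<longrightarrow> map length (snd (colsL e ts)) = map Suc (labl ts)"
  by (induct t and ts rule: tr_mut_induct) (auto simp: len_colsT)

lemma map_len_colsT: "wft t \<Longrightarrow> map length (colsT e t) = map Suc (lab t)" "wfl ts \<Longrightarrow> map length (snd (colsL e ts)) = map Suc (labl ts)"
  using map_len_colsT0 by auto

lemma len_dT0: "\<forall>d. length (dT d t) = length (lab t)" "\<forall>d. length (dL d ts) = length (labl ts)"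
  by (induct t and ts rule: tr_mut_induct) auto

lemma len_dT: "length (dT d t) = length (lab t)" "length (dL d ts) = length (labl ts)"
  using len_dT0 by auto

lemma mset_upt_split: "a \<le> b \<Longrightarrow> b \<le> c \<Longrightarrow> mset [a..<c] = mset [a..<b] + mset [b..<c]"
  by (metis le_Suc_ex mset_append upt_add_eq_append)

lemma mset_cols0: "\<forall>e. mset (concat (colsT e t)) = mset [e..<e + length (wd t)]"
  "\<forall>e. mset (fst (colsL e ts)) + mset (concat (snd (colsL e ts))) = mset [e..<e + length (wdl ts)]"
proof (induct t and ts rule: tr_mut_induct)
  case (2 u t0 ts)
  show ?case
  proof
  fix e
  let ?e' = "e + 1 + length (wd t0)"
  have "mset (concat (colsT e (Nd u t0 ts))) = add_mset e (mset (concat (colsT (Suc e) t0)) + (mset (fst (colsL ?e' ts)) + mset (concat (snd (colsL ?e' ts)))))"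
    by simp
  also have "\<dots> = add_mset e (mset [Suc e..<?e'] + mset [?e'..<?e' + length (wdl ts)])"
    using 2 by simp
  also have "\<dots> = add_mset e (mset [Suc e..<?e' + length (wdl ts)])"
    by (subst mset_upt_split[of "Suc e" ?e' "?e' + length (wdl ts)"]) auto
  also have "\<dots> = mset [e..<e + length (wd (Nd u t0 ts))]"
    by (simp add: upt_conv_Cons add.assoc del: upt_Suc)
  finally show "mset (concat (colsT e (Nd u t0 ts))) = mset [e..<e + length (wd (Nd u t0 ts))]" .
  qed
next
  case (4 t ts)
  show ?case
  proof
  fix e
  let ?e' = "e + 1 + length (wd t)"
  have "mset (fst (colsL e (t # ts))) + mset (concat (snd (colsL e (t # ts)))) = add_mset e (mset (concat (colsT (Suc e) t)) + (mset (fst (colsL ?e' ts)) + mset (concat (snd (colsL ?e' ts)))))"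
    by simp
  also have "\<dots> = add_mset e (mset [Suc e..<?e'] + mset [?e'..<?e' + length (wdl ts)])"
    using 4 by simp
  also have "\<dots> = add_mset e (mset [Suc e..<?e' + length (wdl ts)])"
    by (subst mset_upt_split[of "Suc e" ?e' "?e' + length (wdl ts)"]) auto
  also have "\<dots> = mset [e..<e + length (wdl (t # ts))]"
    by (simp add: upt_conv_Cons add.assoc del: upt_Suc)
  finally show "mset (fst (colsL e (t # ts))) + mset (concat (snd (colsL e (t # ts)))) = mset [e..<e + length (wdl (t # ts))]" .
  qed
qed auto

lemma mset_cols: "mset (concat (colsT e t)) = mset [e..<e + length (wd t)]"
  "mset (fst (colsL e ts)) + mset (concat (snd (colsL e ts))) = mset [e..<e + length (wdl ts)]"
  using mset_cols0 by auto

lemma set_cols: "col \<in> set (colsT e t) \<Longrightarrow> x \<in> set col \<Longrightarrow> e \<le> x \<and> x < e + length (wd t)"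
proof -
  assume "col \<in> set (colsT e t)" "x \<in> set col"
  then have "x \<in> set (concat (colsT e t))" by auto
  then have "x \<in># mset (concat (colsT e t))" by simp
  then show ?thesis unfolding mset_cols(1) by simp
qed

lemma set_colsL: "x \<in> set (fst (colsL e ts)) \<Longrightarrow> e \<le> x \<and> x < e + length (wdl ts)"
proof -
  assume "x \<in> set (fst (colsL e ts))"
  then have "x \<in># mset (fst (colsL e ts)) + mset (concat (snd (colsL e ts)))" by simp
  then show ?thesis unfolding mset_cols(2) by simp
qed

lemma step_1: "fill_step U (1, l) st = st[0 := [1]]"
  by (simp add: fill_step_def)

lemma step_S: "i \<noteq> 1 \<Longrightarrow> c < length U \<Longrightarrow> (\<forall>j<c. st ! j \<noteq> []) \<Longrightarrow> st ! c = [] \<Longrightarrow> fill_step U (i, S) st = st[c := [i]]"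
proof -
  assume a: "i \<noteq> 1" "c < length U" "\<forall>j<c. st ! j \<noteq> []" "st ! c = []"
  have "(LEAST j. j < length U \<and> st ! j = []) = c"
    by (rule Least_equality) (use a in \<open>auto simp: not_less[symmetric]\<close>)
  then show ?thesis using a(1) by (simp add: fill_step_def)
qed

lemma step_W:
  assumes "i \<noteq> 1" "c < length U" "st ! c \<noteq> []" "length (st ! c) < U ! c + 1"
    "\<forall>j<length U. j \<noteq> c \<longrightarrow> st ! j \<noteq> [] \<longrightarrow> length (st ! j) < U ! j + 1 \<longrightarrow> last (st ! j) < last (st ! c)"
  shows "fill_step U (i, W) st = st[c := st ! c @ [i]]"
proof -
  define act where "act = {j. j < length U \<and> st ! j \<noteq> [] \<and> length (st ! j) < U ! j + 1}"
  have cact: "c \<in> act" using assms by (simp add: act_def)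
  have fin: "finite act" by (simp add: act_def)
  have mx: "Max ((\<lambda>j. last (st ! j)) ` act) = last (st ! c)"
  proof (rule Max_eqI)
    show "finite ((\<lambda>j. last (st ! j)) ` act)" using fin by simp
  next
    fix y assume "y \<in> (\<lambda>j. last (st ! j)) ` act"
    then obtain j where "j \<in> act" "y = last (st ! j)" by auto
    then show "y \<le> last (st ! c)" using assms(5) by (cases "j = c") (auto simp: act_def)
  next
    show "last (st ! c) \<in> (\<lambda>j. last (st ! j)) ` act" using cact by simp
  qed
  have le: "(LEAST j. j \<in> act \<and> last (st ! j) = last (st ! c)) = c"
  proof (rule Least_equality)
    show "c \<in> act \<and> last (st ! c) = last (st ! c)" using cact by simp
  next
    fix y assume "y \<in> act \<and> last (st ! y) = last (st ! c)"
    then have "y = c" using assms(5) by (auto simp: act_def)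
    then show "c \<le> y" by simp
  qed
  have "fill_step U (i, W) st = st[(LEAST j. j \<in> act \<and> last (st ! j) = Max ((\<lambda>j. last (st ! j)) ` act)) :=
     st ! (LEAST j. j \<in> act \<and> last (st ! j) = Max ((\<lambda>j. last (st ! j)) ` act)) @ [i]]"
    unfolding fill_step_def act_def Let_def using assms(1) by simp
  then show ?thesis using mx le by simp
qed

lemma zip_upt_append: "zip [e..<e + length (x @ y)] (x @ y) = zip [e..<e + length x] x @ zip [e + length x..<e + length x + length y] y"
proof -
  have "[e..<e + length x + length y] = [e..<e + length x] @ [e + length x..<e + length x + length y]"
    by (rule upt_add_eq_append) simp
  then show ?thesis by (simp add: zip_append add.assoc)
qed

lemma zip_upt_Cons: "zip [e..<e + length (a # w)] (a # w) = (e, a) # zip [Suc e..<Suc e + length w] w"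
proof -
  have "[e..<e + length (a # w)] = e # [Suc e..<Suc e + length w]" by (subst upt_conv_Cons) simp_all
  then show ?thesis by simp
qed

definition invS :: "nat list \<Rightarrow> nat list list \<Rightarrow> nat \<Rightarrow> nat \<Rightarrow> bool" where
  "invS U st c0 e = (length st = length U \<and> (\<forall>j<c0. st ! j \<noteq> []) \<and> (\<forall>j. c0 \<le> j \<longrightarrow> j < length U \<longrightarrow> st ! j = [])
     \<and> (\<forall>j<length U. \<forall>x\<in>set (st ! j). x < e))"

lemma blk_len: "length B = b \<Longrightarrow> a + b \<le> length st \<Longrightarrow> length (take a st @ B @ drop (a + b) st) = length st"
  by simp

lemma blk_nth: "length B = b \<Longrightarrow> a + b \<le> length st \<Longrightarrow> j < length st \<Longrightarrow>
  (take a st @ B @ drop (a + b) st) ! j = (if j < a then st ! j else if j < a + b then B ! (j - a) else st ! j)"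
  by (auto simp: nth_append min_def)

lemma cols_nth_len: "wft t \<Longrightarrow> k < length (lab t) \<Longrightarrow> length (colsT e t ! k) = Suc (lab t ! k)"
  using map_len_colsT(1)[of t e] by (metis len_colsT(1) nth_map)

lemma cols_nth_set: "k < length (lab t) \<Longrightarrow> x \<in> set (colsT e t ! k) \<Longrightarrow> e \<le> x \<and> x < e + length (wd t)"
  using set_cols[of "colsT e t ! k" e t x] len_colsT(1)[of e t] by (metis nth_mem)

lemma eta_main:
  "\<forall>e c0 st. wft t \<longrightarrow> invS U st c0 e \<longrightarrow> c0 + length (lab t) \<le> length U \<longrightarrow> (\<forall>k<length (lab t). U ! (c0 + k) = lab t ! k)
     \<longrightarrow> 1 \<le> e \<longrightarrow> (e = 1 \<longrightarrow> c0 = 0)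
     \<longrightarrow> fold (fill_step U) (zip [e..<e + length (wd t)] (wd t)) st = take c0 st @ colsT e t @ drop (c0 + length (lab t)) st"
  "\<forall>e c1 c st. wfl ts \<longrightarrow> invS U st c1 e \<longrightarrow> c1 + length (labl ts) \<le> length U \<longrightarrow> (\<forall>k<length (labl ts). U ! (c1 + k) = labl ts ! k)
     \<longrightarrow> c < c1 \<longrightarrow> st ! c \<noteq> [] \<longrightarrow> length (st ! c) + length ts = U ! c + 1
     \<longrightarrow> (\<forall>j<length U. j \<noteq> c \<longrightarrow> st ! j \<noteq> [] \<longrightarrow> length (st ! j) < U ! j + 1 \<longrightarrow> last (st ! j) < last (st ! c))
     \<longrightarrow> 2 \<le> e
     \<longrightarrow> fold (fill_step U) (zip [e..<e + length (wdl ts)] (wdl ts)) st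
         = (take c1 st @ snd (colsL e ts) @ drop (c1 + length (labl ts)) st)[c := st ! c @ fst (colsL e ts)]"
proof (induct t and ts rule: tr_mut_induct)
  case 1
  then show ?case by simp
next
  case 3
  then show ?case by (auto simp: invS_def)
next
  case (2 u t0 ts)
  show ?case
  proof (intro allI impI)
    fix e c0 st
    assume wf: "wft (Nd u t0 ts)" and iv: "invS U st c0 e" and cl: "c0 + length (lab (Nd u t0 ts)) \<le> length U"
      and sg: "\<forall>k<length (lab (Nd u t0 ts)). U ! (c0 + k) = lab (Nd u t0 ts) ! k"
      and e1: "1 \<le> e" and e1c: "e = 1 \<longrightarrow> c0 = 0"
    define n0 where "n0 = length (lab t0)"
    define nL where "nL = length (labl ts)"
    define e' where "e' = e + 1 + length (wd t0)"
    define c1 where "c1 = Suc c0 + n0"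
    have wfs: "length ts = u" "wft t0" "wfl ts" using wf by auto
    have lst: "length st = length U" using iv by (simp add: invS_def)
    have c0l: "c0 < length U" using cl by simp
    have c1l: "c1 + nL \<le> length U" using cl by (simp add: c1_def n0_def nL_def)
    have Uc0: "U ! c0 = u" using sg[rule_format, of 0] by simp
    have sg0: "\<forall>k<n0. U ! (Suc c0 + k) = lab t0 ! k"
    proof (intro allI impI)
      fix k assume "k < n0"
      then show "U ! (Suc c0 + k) = lab t0 ! k" using sg[rule_format, of "Suc k"] by (simp add: n0_def nth_append)
    qed
    have sgL: "\<forall>k<nL. U ! (c1 + k) = labl ts ! k"
    proof (intro allI impI)
      fix k assume "k < nL"
      then show "U ! (c1 + k) = labl ts ! k" using sg[rule_format, of "Suc (n0 + k)"] by (simp add: n0_def nL_def c1_def nth_append add.assoc)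
    qed
    have stc0: "st ! c0 = []" using iv c0l by (simp add: invS_def)
    have step1: "fill_step U (e, S) st = st[c0 := [e]]"
    proof (cases "e = 1")
      case True then show ?thesis using e1c step_1 by simp
    next
      case False then show ?thesis using step_S[OF False c0l _ stc0] iv by (simp add: invS_def)
    qed
    define st1 where "st1 = st[c0 := [e]]"
    have iv1: "invS U st1 (Suc c0) (Suc e)"
      using iv c0l unfolding invS_def st1_def
      by (auto simp: nth_list_update less_Suc_eq)
    have F2: "fold (fill_step U) (zip [Suc e..<Suc e + length (wd t0)] (wd t0)) st1 = take (Suc c0) st1 @ colsT (Suc e) t0 @ drop (Suc c0 + n0) st1"
    proof -
      have cl0: "Suc c0 + length (lab t0) \<le> length U" using cl by simp
      show ?thesis unfolding n0_def by (rule 2(1)[rule_format, OF wfs(2) iv1 cl0 sg0[unfolded n0_def, rule_format]]) (use e1 in simp_all)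
    qed
    define st2 where "st2 = take c0 st @ ([e] # colsT (Suc e) t0) @ drop (c0 + Suc n0) st"
    have st2': "take (Suc c0) st1 @ colsT (Suc e) t0 @ drop (Suc c0 + n0) st1 = st2"
      using c0l lst by (simp add: st1_def st2_def take_Suc_conv_app_nth take_update_swap drop_update_cancel list_update_append)
    have lB: "length ([e] # colsT (Suc e) t0) = Suc n0" by (simp add: len_colsT n0_def)
    have cl2: "c0 + Suc n0 \<le> length st" using c1l lst by (simp add: c1_def)
    have lst2: "length st2 = length U" unfolding st2_def using blk_len[OF lB cl2] lst by simp
    have nst2: "j < length U \<Longrightarrow> st2 ! j = (if j < c0 then st ! j else if j = c0 then [e] else if j < c1 then colsT (Suc e) t0 ! (j - Suc c0) else st ! j)" for j
      unfolding st2_def using blk_nth[OF lB cl2, of j] lst by (auto simp: c1_def nth_Cons')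
    have full: "Suc c0 \<le> j \<Longrightarrow> j < c1 \<Longrightarrow> length (st2 ! j) = U ! j + 1" for j
    proof -
      assume j: "Suc c0 \<le> j" "j < c1"
      then have "j < length U" using c1l by simp
      then have "st2 ! j = colsT (Suc e) t0 ! (j - Suc c0)" using j nst2 by simp
      moreover have "length (colsT (Suc e) t0 ! (j - Suc c0)) = Suc (lab t0 ! (j - Suc c0))"
        using cols_nth_len[OF wfs(2)] j by (simp add: c1_def n0_def)
      moreover have "U ! j = lab t0 ! (j - Suc c0)"
      proof -
        have k: "j - Suc c0 < n0" "Suc c0 + (j - Suc c0) = j" using j by (auto simp: c1_def)
        show ?thesis using sg0[rule_format, OF k(1)] k(2) by simp
      qed
      ultimately show ?thesis by simp
    qed
    have iv2: "invS U st2 c1 e'"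
      unfolding invS_def
    proof (intro conjI allI impI ballI)
      show "length st2 = length U" by (rule lst2)
    next
      fix j assume j: "j < c1"
      show "st2 ! j \<noteq> []"
      proof (cases "j < c0")
        case True then show ?thesis using iv j c1l nst2 by (simp add: invS_def)
      next
        case False
        then show ?thesis using full[of j] j c1l nst2[of j] by (cases "j = c0") auto
      qed
    next
      fix j assume "c1 \<le> j" "j < length U"
      then show "st2 ! j = []" using nst2 iv by (simp add: invS_def c1_def)
    next
      fix j x assume j: "j < length U" and x: "x \<in> set (st2 ! j)"
      show "x < e'"
      proof (cases "j < c0 \<or> c1 \<le> j")
        case True
        then have "x \<in> set (st ! j)" using x nst2[OF j] by (auto simp: c1_def)
        then have "x < e" using iv j unfolding invS_def by blast
        then show ?thesis by (simp add: e'_def)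
      next
        case False
        show ?thesis
        proof (cases "j = c0")
          case True then show ?thesis using x nst2[OF j] by (simp add: e'_def)
        next
          case False
          then have "x \<in> set (colsT (Suc e) t0 ! (j - Suc c0))" using x nst2[OF j] \<open>\<not> (j < c0 \<or> c1 \<le> j)\<close> by auto
          moreover have "j - Suc c0 < length (lab t0)" using False \<open>\<not> (j < c0 \<or> c1 \<le> j)\<close> by (auto simp: c1_def n0_def)
          ultimately show ?thesis using cols_nth_set[of "j - Suc c0" t0 x "Suc e"] by (simp add: e'_def)
        qed
      qed
    qed
    have st2c0: "st2 ! c0 = [e]" using nst2 c0l by simp
    have act: "\<forall>j<length U. j \<noteq> c0 \<longrightarrow> st2 ! j \<noteq> [] \<longrightarrow> length (st2 ! j) < U ! j + 1 \<longrightarrow> last (st2 ! j) < last (st2 ! c0)"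
    proof (intro allI impI)
      fix j assume j: "j < length U" "j \<noteq> c0" "st2 ! j \<noteq> []" "length (st2 ! j) < U ! j + 1"
      show "last (st2 ! j) < last (st2 ! c0)"
      proof (cases "j < c0")
        case True
        then have "st2 ! j = st ! j" using nst2 j by simp
        then have "last (st2 ! j) < e" using iv j by (auto simp: invS_def)
        then show ?thesis using st2c0 by simp
      next
        case False
        have "c1 \<le> j"
        proof (rule ccontr)
          assume "\<not> c1 \<le> j"
          then have "Suc c0 \<le> j" "j < c1" using False j(2) by auto
          then show False using full j(4) by fastforce
        qed
        then have "st2 ! j = []" using iv2 j by (simp add: invS_def)
        then show ?thesis using j by simp
      qed
    qed
    have F3: "fold (fill_step U) (zip [e'..<e' + length (wdl ts)] (wdl ts)) st2
         = (take c1 st2 @ snd (colsL e' ts) @ drop (c1 + nL) st2)[c0 := st2 ! c0 @ fst (colsL e' ts)]"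
    proof -
      have c0c1: "c0 < c1" by (simp add: c1_def)
      have ne: "st2 ! c0 \<noteq> []" using st2c0 by simp
      have len: "length (st2 ! c0) + length ts = U ! c0 + 1" using st2c0 wfs(1) Uc0 by simp
      have X: "2 \<le> e'" using e1 by (simp add: e'_def)
      show ?thesis unfolding nL_def
        by (rule 2(2)[rule_format, OF wfs(3) iv2 c1l[unfolded nL_def] sgL[unfolded nL_def, rule_format] c0c1 ne len act[rule_format] X])
    qed
    have "fold (fill_step U) (zip [e..<e + length (wd (Nd u t0 ts))] (wd (Nd u t0 ts))) st
        = fold (fill_step U) (zip [e'..<e' + length (wdl ts)] (wdl ts))
            (fold (fill_step U) (zip [Suc e..<Suc e + length (wd t0)] (wd t0)) (fill_step U (e, S) st))"
    proof -
      have "zip [e..<e + length (wd (Nd u t0 ts))] (wd (Nd u t0 ts)) = (e, S) # zip [Suc e..<Suc e + length (wd t0 @ wdl ts)] (wd t0 @ wdl ts)"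
        using zip_upt_Cons[of e S "wd t0 @ wdl ts"] by simp
      also have "\<dots> = (e, S) # (zip [Suc e..<Suc e + length (wd t0)] (wd t0) @ zip [e'..<e' + length (wdl ts)] (wdl ts))"
        using zip_upt_append[of "Suc e" "wd t0" "wdl ts"] by (simp add: e'_def)
      finally show ?thesis by simp
    qed
    also have "\<dots> = (take c1 st2 @ snd (colsL e' ts) @ drop (c1 + nL) st2)[c0 := [e] @ fst (colsL e' ts)]"
      using step1 F2 st2' F3 st2c0 by (simp add: st1_def)
    also have "\<dots> = take c0 st @ colsT e (Nd u t0 ts) @ drop (c0 + length (lab (Nd u t0 ts))) st"
    proof -
      have lt: "length (take c0 st) = c0" using c0l lst by simp
      have lC: "length (colsT (Suc e) t0) = n0" by (simp add: len_colsT n0_def)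
      have t2: "take c1 st2 = take c0 st @ [e] # colsT (Suc e) t0" unfolding st2_def c1_def using lt lC by simp
      have d2: "drop (c1 + nL) st2 = drop (c0 + Suc (n0 + nL)) st" unfolding st2_def c1_def using lt lC cl2 by (simp add: algebra_simps)
      show ?thesis using lt unfolding t2 d2 by (simp add: e'_def n0_def nL_def list_update_append)
    qed
    finally show "fold (fill_step U) (zip [e..<e + length (wd (Nd u t0 ts))] (wd (Nd u t0 ts))) st =
        take c0 st @ colsT e (Nd u t0 ts) @ drop (c0 + length (lab (Nd u t0 ts))) st" .
  qed
next
  case (4 t ts)
  show ?case
  proof (intro allI impI)
    fix e c1 c st
    assume wf: "wfl (t # ts)" and iv: "invS U st c1 e" and cl: "c1 + length (labl (t # ts)) \<le> length U"
      and sg: "\<forall>k<length (labl (t # ts)). U ! (c1 + k) = labl (t # ts) ! k"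
      and cc1: "c < c1" and ne: "st ! c \<noteq> []" and len: "length (st ! c) + length (t # ts) = U ! c + 1"
      and act: "\<forall>j<length U. j \<noteq> c \<longrightarrow> st ! j \<noteq> [] \<longrightarrow> length (st ! j) < U ! j + 1 \<longrightarrow> last (st ! j) < last (st ! c)"
      and e2: "2 \<le> e"
    define R where "R = st ! c"
    define nt where "nt = length (lab t)"
    define nL where "nL = length (labl ts)"
    define e' where "e' = e + 1 + length (wd t)"
    define c1' where "c1' = c1 + nt"
    have wfs: "wft t" "wfl ts" using wf by auto
    have lst: "length st = length U" using iv by (simp add: invS_def)
    have cU: "c < length U" using cc1 cl by simp
    have Rl: "\<forall>x\<in>set R. x < e" using iv cU by (simp add: invS_def R_def)
    have lastR: "last R < e" using Rl ne by (simp add: R_def)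
    have step1: "fill_step U (e, W) st = st[c := R @ [e]]"
      unfolding R_def by (rule step_W) (use e2 cU ne len act in auto)
    define st1 where "st1 = st[c := R @ [e]]"
    have nst1: "st1 ! j = (if j = c then R @ [e] else st ! j)" if "j < length U" for j
      using that lst by (simp add: st1_def nth_list_update)
    have lst1: "length st1 = length U" using lst by (simp add: st1_def)
    have iv1: "invS U st1 c1 (Suc e)"
      unfolding invS_def
    proof (intro conjI allI impI ballI)
      show "length st1 = length U" by (rule lst1)
    next
      fix j assume "j < c1" then show "st1 ! j \<noteq> []" using iv cl nst1[of j] by (auto simp: invS_def)
    next
      fix j assume "c1 \<le> j" "j < length U" then show "st1 ! j = []" using iv cc1 nst1[of j] by (auto simp: invS_def)
    next
      fix j x assume j: "j < length U" and x: "x \<in> set (st1 ! j)"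
      show "x < Suc e"
      proof (cases "j = c")
        case True then show ?thesis using x Rl nst1[OF j] by auto
      next
        case False
        then have "x \<in> set (st ! j)" using x nst1[OF j] by simp
        then have "x < e" using iv j unfolding invS_def by blast
        then show ?thesis by simp
      qed
    qed
    have sgt: "\<forall>k<nt. U ! (c1 + k) = lab t ! k"
      using sg by (auto simp: nt_def nth_append)
    have sgL: "\<forall>k<nL. U ! (c1' + k) = labl ts ! k"
    proof (intro allI impI)
      fix k assume "k < nL"
      then show "U ! (c1' + k) = labl ts ! k" using sg[rule_format, of "nt + k"] by (simp add: nt_def nL_def c1'_def nth_append add.assoc)
    qed
    have F2: "fold (fill_step U) (zip [Suc e..<Suc e + length (wd t)] (wd t)) st1 = take c1 st1 @ colsT (Suc e) t @ drop (c1 + nt) st1"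
    proof -
      have clt: "c1 + length (lab t) \<le> length U" using cl by simp
      show ?thesis unfolding nt_def by (rule 4(1)[rule_format, OF wfs(1) iv1 clt sgt[unfolded nt_def, rule_format]]) (use e2 in simp_all)
    qed
    define st2 where "st2 = take c1 st1 @ colsT (Suc e) t @ drop (c1 + nt) st1"
    have lB: "length (colsT (Suc e) t) = nt" by (simp add: len_colsT nt_def)
    have cl2: "c1 + nt \<le> length st1" using cl lst1 by (simp add: nt_def)
    have lst2: "length st2 = length U" unfolding st2_def using blk_len[OF lB cl2] lst1 by simp
    have nst2: "j < length U \<Longrightarrow> st2 ! j = (if j < c1 then st1 ! j else if j < c1' then colsT (Suc e) t ! (j - c1) else st1 ! j)" for j
      unfolding st2_def c1'_def using blk_nth[OF lB cl2, of j] lst1 by auto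
    have full: "c1 \<le> j \<Longrightarrow> j < c1' \<Longrightarrow> length (st2 ! j) = U ! j + 1" for j
    proof -
      assume j: "c1 \<le> j" "j < c1'"
      then have jU: "j < length U" using cl by (simp add: c1'_def nt_def)
      then have "st2 ! j = colsT (Suc e) t ! (j - c1)" using j nst2 by simp
      moreover have k: "j - c1 < nt" "c1 + (j - c1) = j" using j by (auto simp: c1'_def)
      moreover have "length (colsT (Suc e) t ! (j - c1)) = Suc (lab t ! (j - c1))"
        using cols_nth_len[OF wfs(1)] k by (simp add: nt_def)
      moreover have "U ! j = lab t ! (j - c1)" using sgt[rule_format, OF k(1)] k(2) by simp
      ultimately show ?thesis by simp
    qed
    have iv2: "invS U st2 c1' e'"
      unfolding invS_def
    proof (intro conjI allI impI ballI)
      show "length st2 = length U" by (rule lst2)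
    next
      fix j assume j: "j < c1'"
      have jU: "j < length U" using j cl by (simp add: c1'_def nt_def)
      show "st2 ! j \<noteq> []"
      proof (cases "j < c1")
        case True then show ?thesis using iv1 nst2[OF jU] by (simp add: invS_def)
      next
        case False then show ?thesis using full[of j] j by auto
      qed
    next
      fix j assume "c1' \<le> j" "j < length U"
      then show "st2 ! j = []" using nst2[of j] iv1 by (simp add: invS_def c1'_def)
    next
      fix j x assume j: "j < length U" and x: "x \<in> set (st2 ! j)"
      show "x < e'"
      proof (cases "j < c1 \<or> c1' \<le> j")
        case True
        then have "x \<in> set (st1 ! j)" using x nst2[OF j] by (auto simp: c1'_def)
        then have "x < Suc e" using iv1 j unfolding invS_def by blast
        then show ?thesis by (simp add: e'_def)
      next
        case False
        then have "x \<in> set (colsT (Suc e) t ! (j - c1))" using x nst2[OF j] by auto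
        moreover have "j - c1 < length (lab t)" using False by (auto simp: c1'_def nt_def)
        ultimately show ?thesis using cols_nth_set[of "j - c1" t x "Suc e"] by (simp add: e'_def)
      qed
    qed
    have st2c: "st2 ! c = R @ [e]" using nst2 cU cc1 nst1 by simp
    have act2: "\<forall>j<length U. j \<noteq> c \<longrightarrow> st2 ! j \<noteq> [] \<longrightarrow> length (st2 ! j) < U ! j + 1 \<longrightarrow> last (st2 ! j) < last (st2 ! c)"
    proof (intro allI impI)
      fix j assume j: "j < length U" "j \<noteq> c" "st2 ! j \<noteq> []" "length (st2 ! j) < U ! j + 1"
      show "last (st2 ! j) < last (st2 ! c)"
      proof (cases "j < c1")
        case True
        then have "st2 ! j = st ! j" using nst2 nst1 j by simp
        then have "last (st2 ! j) < last R" using act j by (simp add: R_def)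
        then show ?thesis using st2c lastR by simp
      next
        case False
        have "c1' \<le> j"
        proof (rule ccontr)
          assume "\<not> c1' \<le> j"
          then show False using full[of j] False j(4) by simp
        qed
        then have "st2 ! j = []" using iv2 j by (simp add: invS_def)
        then show ?thesis using j by simp
      qed
    qed
    have F3: "fold (fill_step U) (zip [e'..<e' + length (wdl ts)] (wdl ts)) st2
         = (take c1' st2 @ snd (colsL e' ts) @ drop (c1' + nL) st2)[c := st2 ! c @ fst (colsL e' ts)]"
    proof -
      have cc: "c < c1'" using cc1 by (simp add: c1'_def)
      have ne2: "st2 ! c \<noteq> []" using st2c by simp
      have len2: "length (st2 ! c) + length ts = U ! c + 1" using st2c len by (simp add: R_def)
      have X: "2 \<le> e'" using e2 by (simp add: e'_def)
      have cl3: "c1' + length (labl ts) \<le> length U" using cl by (simp add: c1'_def nt_def)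
      show ?thesis unfolding nL_def
        by (rule 4(2)[rule_format, OF wfs(2) iv2 cl3 sgL[unfolded nL_def, rule_format] cc ne2 len2 act2[rule_format] X])
    qed
    have "fold (fill_step U) (zip [e..<e + length (wdl (t # ts))] (wdl (t # ts))) st
        = fold (fill_step U) (zip [e'..<e' + length (wdl ts)] (wdl ts))
            (fold (fill_step U) (zip [Suc e..<Suc e + length (wd t)] (wd t)) (fill_step U (e, W) st))"
    proof -
      have "zip [e..<e + length (wdl (t # ts))] (wdl (t # ts)) = (e, W) # zip [Suc e..<Suc e + length (wd t @ wdl ts)] (wd t @ wdl ts)"
        using zip_upt_Cons[of e W "wd t @ wdl ts"] by simp
      also have "\<dots> = (e, W) # (zip [Suc e..<Suc e + length (wd t)] (wd t) @ zip [e'..<e' + length (wdl ts)] (wdl ts))"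
        using zip_upt_append[of "Suc e" "wd t" "wdl ts"] by (simp add: e'_def)
      finally show ?thesis by simp
    qed
    also have "\<dots> = (take c1' st2 @ snd (colsL e' ts) @ drop (c1' + nL) st2)[c := (R @ [e]) @ fst (colsL e' ts)]"
      using step1 F2 F3 st2c by (simp add: st1_def st2_def)
    also have "\<dots> = (take c1 st @ snd (colsL e (t # ts)) @ drop (c1 + length (labl (t # ts))) st)[c := st ! c @ fst (colsL e (t # ts))]"
    proof -
      have lt: "length (take c1 st) = c1" using cl lst by simp
      have t2: "take c1' st2 = (take c1 st)[c := R @ [e]] @ colsT (Suc e) t"
        unfolding st2_def c1'_def st1_def using lt lB lst cl by (simp add: take_update_swap)
      have d2: "drop (c1' + nL) st2 = drop (c1 + (nt + nL)) st"
        unfolding st2_def c1'_def st1_def using lt lB lst cl cc1 by (simp add: algebra_simps)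
      show ?thesis using lt cc1 unfolding t2 d2 by (simp add: e'_def nt_def nL_def list_update_append R_def)
    qed
    finally show "fold (fill_step U) (zip [e..<e + length (wdl (t # ts))] (wdl (t # ts))) st =
        (take c1 st @ snd (colsL e (t # ts)) @ drop (c1 + length (labl (t # ts))) st)[c := st ! c @ fst (colsL e (t # ts))]" .
  qed
qed


lemma eta_tree: "wft t \<Longrightarrow> eta (lab t) (wd t) = colsT 1 t"
proof -
  assume w: "wft t"
  let ?U = "lab t"
  let ?st = "replicate (length ?U) ([] :: nat list)"
  have iv: "invS ?U ?st 0 1" by (simp add: invS_def)
  have "fold (fill_step ?U) (zip [1..<1 + length (wd t)] (wd t)) ?st = take 0 ?st @ colsT 1 t @ drop (0 + length ?U) ?st"
    by (rule eta_main(1)[where U="lab t" and t=t, rule_format, OF w iv]) simp_all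
  then show ?thesis unfolding eta_def by (simp add: add.commute)
qed

definition Qi :: "nat list list \<Rightarrow> nat list \<Rightarrow> nat \<Rightarrow> bool" where
  "Qi G DS i = (\<exists>c<i. \<exists>p<length (G ! c). G ! c ! p = hd (G ! i) - 1 \<and> DS ! i = DS ! c + p)"

lemma hd_colsT: "t \<noteq> Lf \<Longrightarrow> hd (colsT e t ! 0) = e \<and> dT d t ! 0 = d \<and> length (lab t) > 0"
  by (cases t) auto

lemma lab_Lf: "length (lab t) = 0 \<Longrightarrow> t = Lf"
  by (cases t) auto

lemma qprop:
  "\<forall>G DS c0 e d. (\<forall>k<length (lab t). G ! (c0 + k) = colsT e t ! k \<and> DS ! (c0 + k) = dT d t ! k)
      \<longrightarrow> (\<forall>i. c0 < i \<longrightarrow> i < c0 + length (lab t) \<longrightarrow> Qi G DS i)"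
  "\<forall>G DS c c1 e d p0. c < c1 \<longrightarrow> DS ! c = d \<longrightarrow> (\<forall>k<length ts. p0 + k < length (G ! c) \<and> G ! c ! (p0 + k) = fst (colsL e ts) ! k)
      \<longrightarrow> (\<forall>k<length (labl ts). G ! (c1 + k) = snd (colsL e ts) ! k \<and> DS ! (c1 + k) = dL (d + p0) ts ! k)
      \<longrightarrow> (\<forall>i. c1 \<le> i \<longrightarrow> i < c1 + length (labl ts) \<longrightarrow> Qi G DS i)"
proof (induct t and ts rule: tr_mut_induct)
  case 1 then show ?case by simp
next
  case 3 then show ?case by simp
next
  case (2 u t0 ts)
  show ?case
  proof (intro allI impI)
    fix G DS c0 e d i
    assume bl: "\<forall>k<length (lab (Nd u t0 ts)). G ! (c0 + k) = colsT e (Nd u t0 ts) ! k \<and> DS ! (c0 + k) = dT d (Nd u t0 ts) ! k"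
      and i: "c0 < i" "i < c0 + length (lab (Nd u t0 ts))"
    define n0 where "n0 = length (lab t0)"
    define e' where "e' = e + 1 + length (wd t0)"
    have lC: "length (colsT (Suc e) t0) = n0" "length (dT d t0) = n0" by (simp_all add: len_colsT len_dT n0_def)
    have b0: "G ! c0 = e # fst (colsL e' ts)" "DS ! c0 = d" using bl[rule_format, of 0] by (simp_all add: e'_def)
    have b1: "\<forall>k<n0. G ! (Suc c0 + k) = colsT (Suc e) t0 ! k \<and> DS ! (Suc c0 + k) = dT d t0 ! k"
    proof (intro allI impI)
      fix k assume k: "k < n0"
      show "G ! (Suc c0 + k) = colsT (Suc e) t0 ! k \<and> DS ! (Suc c0 + k) = dT d t0 ! k"
        using bl[rule_format, of "Suc k"] k lC by (simp add: nth_append n0_def)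
    qed
    have b2: "\<forall>k<length (labl ts). G ! (Suc c0 + n0 + k) = snd (colsL e' ts) ! k \<and> DS ! (Suc c0 + n0 + k) = dL (d + 1) ts ! k"
    proof (intro allI impI)
      fix k assume k: "k < length (labl ts)"
      show "G ! (Suc c0 + n0 + k) = snd (colsL e' ts) ! k \<and> DS ! (Suc c0 + n0 + k) = dL (d + 1) ts ! k"
        using bl[rule_format, of "Suc (n0 + k)"] k lC by (simp add: nth_append n0_def e'_def add.assoc)
    qed
    have bF: "\<forall>k<length ts. 1 + k < length (G ! c0) \<and> G ! c0 ! (1 + k) = fst (colsL e' ts) ! k"
      using b0 by (simp add: len_colsT)
    show "Qi G DS i"
    proof (cases "i < Suc c0 + n0")
      case True
      show ?thesis
      proof (cases "i = Suc c0")
        case True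
        have "t0 \<noteq> Lf" using \<open>i < Suc c0 + n0\<close> True by (auto simp: n0_def)
        then have h: "hd (colsT (Suc e) t0 ! 0) = Suc e" "dT d t0 ! 0 = d" "0 < n0" using hd_colsT by (auto simp: n0_def)
        have "G ! i = colsT (Suc e) t0 ! 0" "DS ! i = dT d t0 ! 0" using b1[rule_format, of 0] h True by auto
        then show ?thesis unfolding Qi_def using b0 h True
          by (intro exI[of _ c0] conjI exI[of _ 0]) auto
      next
        case False
        then show ?thesis using 2(1)[rule_format, OF b1[unfolded n0_def, rule_format], of i] i \<open>i < Suc c0 + n0\<close> by (simp add: n0_def)
      qed
    next
      case False
      have "c0 < Suc c0 + n0" by simp
      then show ?thesis using 2(2)[rule_format, OF _ b0(2) bF[rule_format] b2[rule_format], of i] False i by (simp add: n0_def)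
    qed
  qed
next
  case (4 t ts)
  show ?case
  proof (intro allI impI)
    fix G DS c c1 e d p0 i
    assume cc: "c < c1" and dc: "DS ! c = d"
      and bF: "\<forall>k<length (t # ts). p0 + k < length (G ! c) \<and> G ! c ! (p0 + k) = fst (colsL e (t # ts)) ! k"
      and bl: "\<forall>k<length (labl (t # ts)). G ! (c1 + k) = snd (colsL e (t # ts)) ! k \<and> DS ! (c1 + k) = dL (d + p0) (t # ts) ! k"
      and i: "c1 \<le> i" "i < c1 + length (labl (t # ts))"
    define nt where "nt = length (lab t)"
    define e' where "e' = e + 1 + length (wd t)"
    have lC: "length (colsT (Suc e) t) = nt" "length (dT (d + p0) t) = nt" by (simp_all add: len_colsT len_dT nt_def)
    have f0: "p0 < length (G ! c)" "G ! c ! p0 = e" using bF[rule_format, of 0] by simp_all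
    have bF': "\<forall>k<length ts. Suc p0 + k < length (G ! c) \<and> G ! c ! (Suc p0 + k) = fst (colsL e' ts) ! k"
    proof (intro allI impI)
      fix k assume "k < length ts"
      then show "Suc p0 + k < length (G ! c) \<and> G ! c ! (Suc p0 + k) = fst (colsL e' ts) ! k"
        using bF[rule_format, of "Suc k"] by (simp add: e'_def)
    qed
    have b1: "\<forall>k<nt. G ! (c1 + k) = colsT (Suc e) t ! k \<and> DS ! (c1 + k) = dT (d + p0) t ! k"
    proof (intro allI impI)
      fix k assume k: "k < nt"
      show "G ! (c1 + k) = colsT (Suc e) t ! k \<and> DS ! (c1 + k) = dT (d + p0) t ! k"
        using bl[rule_format, of k] k lC by (simp add: nth_append nt_def)
    qed
    have b2: "\<forall>k<length (labl ts). G ! (c1 + nt + k) = snd (colsL e' ts) ! k \<and> DS ! (c1 + nt + k) = dL (d + Suc p0) ts ! k"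
    proof (intro allI impI)
      fix k assume k: "k < length (labl ts)"
      show "G ! (c1 + nt + k) = snd (colsL e' ts) ! k \<and> DS ! (c1 + nt + k) = dL (d + Suc p0) ts ! k"
        using bl[rule_format, of "nt + k"] k lC by (simp add: nth_append nt_def e'_def add.assoc)
    qed
    show "Qi G DS i"
    proof (cases "i < c1 + nt")
      case True
      show ?thesis
      proof (cases "i = c1")
        case True
        have "t \<noteq> Lf" using \<open>i < c1 + nt\<close> True by (auto simp: nt_def)
        then have h: "hd (colsT (Suc e) t ! 0) = Suc e" "dT (d + p0) t ! 0 = d + p0" "0 < nt" using hd_colsT by (auto simp: nt_def)
        have "G ! i = colsT (Suc e) t ! 0" "DS ! i = dT (d + p0) t ! 0" using b1[rule_format, of 0] h True by auto
        then show ?thesis unfolding Qi_def using f0 h True cc dc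
          by (intro exI[of _ c] conjI exI[of _ p0]) auto
      next
        case False
        then show ?thesis using 4(1)[rule_format, OF b1[unfolded nt_def, rule_format], of i] i \<open>i < c1 + nt\<close> by (simp add: nt_def)
      qed
    next
      case False
      have "c < c1 + nt" using cc by simp
      then show ?thesis using 4(2)[rule_format, OF _ dc bF'[rule_format] b2[rule_format], of i] False i by (simp add: nt_def)
    qed
  qed
qed

lemma fold_build: "n \<le> length DS \<Longrightarrow> (\<forall>i<length DS. g (take i DS) i = DS ! i) \<Longrightarrow> fold (\<lambda>i ds. ds @ [g ds i]) [0..<n] [] = take n DS"
proof (induction n)
  case (Suc n)
  then have "fold (\<lambda>i ds. ds @ [g ds i]) [0..<n] [] = take n DS" by simp
  then show ?case using Suc.prems by (simp add: take_Suc_conv_app_nth)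
qed simp

lemma disj_cols: "distinct (concat G) \<Longrightarrow> i < length G \<Longrightarrow> j < length G \<Longrightarrow> x \<in> set (G ! i) \<Longrightarrow> x \<in> set (G ! j) \<Longrightarrow> i = j"
proof (induction G arbitrary: i j)
  case (Cons a G)
  have D: "set a \<inter> set (G ! k) = {}" if "k < length G" for k
    using Cons.prems(1) nth_mem[OF that] by auto
  show ?case
  proof (cases i)
    case 0
    show ?thesis
    proof (cases j)
      case (Suc j')
      then show ?thesis using Cons.prems 0 D[of j'] by auto
    qed (use 0 in simp)
  next
    case (Suc i')
    show ?thesis
    proof (cases j)
      case 0
      then show ?thesis using Cons.prems Suc D[of i'] by auto
    next
      case (Suc j')
      then show ?thesis using Cons \<open>i = Suc i'\<close> by auto
    qed
  qed
qed simp

lemma depth_wd: "wft t \<Longrightarrow> depth (lab t) (wd t) = Dn 0 t"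
proof -
  assume w: "wft t"
  define G where "G = colsT 1 t"
  define DS where "DS = dT 0 t"
  define m where "m = length (lab t)"
  have lG: "length G = m" by (simp add: G_def m_def len_colsT)
  have lDS: "length DS = m" by (simp add: DS_def m_def len_dT)
  have dist: "distinct (concat G)"
    using mset_eq_imp_distinct_iff[OF mset_cols(1)[of 1 t]] by (simp add: G_def)
  have Q: "\<And>i. 0 < i \<Longrightarrow> i < m \<Longrightarrow> Qi G DS i"
    using qprop(1)[where t=t, rule_format, of G 0 1 DS 0] by (simp add: G_def DS_def m_def)
  define g where "g = (\<lambda>ds i. if i = 0 then 0 else
              (let A = hd (G ! i) - 1;
                   c = (LEAST c. c < length (lab t) \<and> A \<in> set (G ! c));
                   p = (LEAST p. p < length (G ! c) \<and> G ! c ! p = A)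
               in ds ! c + (p :: nat)))"
  have ds: "depth_seq (lab t) (wd t) = fold (\<lambda>i ds. ds @ [g ds i]) [0..<m] []"
    unfolding depth_seq_def eta_tree[OF w] g_def G_def m_def Let_def by (rule refl)
  have gi: "\<forall>i<length DS. g (take i DS) i = DS ! i"
  proof (intro allI impI)
    fix i assume "i < length DS"
    then have im: "i < m" using lDS by simp
    show "g (take i DS) i = DS ! i"
    proof (cases "i = 0")
      case True
      have "t \<noteq> Lf" using im by (auto simp: m_def)
      then have "DS ! 0 = 0" using hd_colsT[of t 1 0] by (simp add: DS_def)
      then show ?thesis using True by (simp add: g_def)
    next
      case False
      obtain c p where cp: "c < i" "p < length (G ! c)" "G ! c ! p = hd (G ! i) - 1" "DS ! i = DS ! c + p"
        using Q[of i] False im unfolding Qi_def by blast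
      define A where "A = hd (G ! i) - 1"
      have cm: "c < m" using cp im by simp
      have Ain: "A \<in> set (G ! c)" using cp nth_mem[OF cp(2)] by (simp add: A_def)
      have lc: "(LEAST c. c < length (lab t) \<and> A \<in> set (G ! c)) = c"
      proof (rule Least_equality)
        show "c < length (lab t) \<and> A \<in> set (G ! c)" using cm Ain by (simp add: m_def)
      next
        fix y assume "y < length (lab t) \<and> A \<in> set (G ! y)"
        then have "y = c" using disj_cols[OF dist, of y c A] Ain cm lG by (simp add: m_def)
        then show "c \<le> y" by simp
      qed
      have dc: "distinct (G ! c)" using dist cm lG by (simp add: distinct_concat_iff)
      have lp: "(LEAST p. p < length (G ! c) \<and> G ! c ! p = A) = p"
      proof (rule Least_equality)
        show "p < length (G ! c) \<and> G ! c ! p = A" using cp by (simp add: A_def)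
      next
        fix y assume "y < length (G ! c) \<and> G ! c ! y = A"
        then have "y = p" using nth_eq_iff_index_eq[OF dc, of y p] cp by (simp add: A_def)
        then show "p \<le> y" by simp
      qed
      have "g (take i DS) i = take i DS ! (LEAST c. c < length (lab t) \<and> A \<in> set (G ! c))
          + (LEAST p. p < length (G ! (LEAST c. c < length (lab t) \<and> A \<in> set (G ! c)))
                \<and> G ! (LEAST c. c < length (lab t) \<and> A \<in> set (G ! c)) ! p = A)"
        using False unfolding g_def Let_def A_def by simp
      also have "\<dots> = take i DS ! c + p" using lc lp by simp
      also have "\<dots> = DS ! i" using cp by simp
      finally show ?thesis .
    qed
  qed
  have "depth_seq (lab t) (wd t) = DS" using ds fold_build[where DS=DS and g=g and n=m, OF _ gi] lDS by simp
  then show ?thesis by (simp add: depth_def Dn_def DS_def)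
qed


declare mset_upt[simp]


lemma area_wd: "wft t \<Longrightarrow> area (lab t) (wd t) = nat (At 0 t)"
proof -
  assume w: "wft t"
  have "Sa 0 (lab t @ []) (wd t) = At 0 t" using rank_tree(1) w by blast
  then show ?thesis unfolding area_def Sa_eq by simp
qed

lemma len_SW: "length w = cS w + cW w"
proof (induction w)
  case (Cons l w) then show ?case by (cases l) auto
qed simp

lemma fin_formula: "cS w \<le> length us \<Longrightarrow> fin r us w = r + int (sum_list (take (cS w) us)) - int (cW w)"
proof (induction r us w rule: fin.induct)
  case (2 r us w) then show ?case by (cases us) auto
qed auto

lemma wd_dyck: "wft t \<Longrightarrow> wd t \<in> dyck_paths (lab t)"
proof -
  assume w: "wft t"
  have r: "\<forall>x\<in>set (start_ranks 0 (lab t @ []) (wd t)). 0 \<le> x" using rank_tree(1) w by blast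
  have "cW (wd t) = sum_list (lab t)" using cW_wd(1) w by blast
  then show ?thesis using r cS_wd(1)[of t] len_SW[of "wd t"] by (simp add: dyck_paths_def)
qed

lemma dyck_wd: "w \<in> dyck_paths u \<Longrightarrow> \<exists>t. wft t \<and> lab t = u \<and> wd t = w"
proof -
  assume d: "w \<in> dyck_paths u"
  have c: "length u = cS w" using d by (simp add: dyck_paths_def)
  have "fin 0 u w = 0" using d c fin_formula[of w u 0] by (simp add: dyck_paths_def)
  then show ?thesis using surj_tree[of 0 u w] d c by (simp add: dyck_paths_def)
qed

lemma nS_wdl: "wdl ts @ w = [] \<or> hd (wdl ts @ w) \<noteq> S \<longleftrightarrow> (ts \<noteq> [] \<or> w = [] \<or> hd w \<noteq> S)"
  by (cases ts) auto

lemma wd_inj: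
  "(\<forall>t' w w' us us'. wft t \<longrightarrow> wft t' \<longrightarrow> wd t @ w = wd t' @ w' \<longrightarrow> lab t @ us = lab t' @ us'
     \<longrightarrow> (w = [] \<or> hd w \<noteq> S) \<longrightarrow> (w' = [] \<or> hd w' \<noteq> S) \<longrightarrow> t = t' \<and> w = w' \<and> us = us')"
  "(\<forall>ts' w w' us us'. wfl ts \<longrightarrow> wfl ts' \<longrightarrow> length ts = length ts' \<longrightarrow> wdl ts @ w = wdl ts' @ w' \<longrightarrow> labl ts @ us = labl ts' @ us'
     \<longrightarrow> (w = [] \<or> hd w \<noteq> S) \<longrightarrow> (w' = [] \<or> hd w' \<noteq> S) \<longrightarrow> ts = ts' \<and> w = w' \<and> us = us')"
proof (induct t and ts rule: tr_mut_induct)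
  case 1
  show ?case
  proof (intro allI impI)
    fix t' w w' us us'
    assume a: "wft Lf" "wft t'" "wd Lf @ w = wd t' @ w'" "lab Lf @ us = lab t' @ us'" "w = [] \<or> hd w \<noteq> S" "w' = [] \<or> hd w' \<noteq> S"
    show "Lf = t' \<and> w = w' \<and> us = us'"
    proof (cases t')
      case Lf then show ?thesis using a by simp
    next
      case (Nd u t0 ts) then show ?thesis using a by simp
    qed
  qed
next
  case (2 u t0 ts)
  show ?case
  proof (intro allI impI)
    fix t' w w' us us'
    assume a: "wft (Nd u t0 ts)" "wft t'" "wd (Nd u t0 ts) @ w = wd t' @ w'" "lab (Nd u t0 ts) @ us = lab t' @ us'" "w = [] \<or> hd w \<noteq> S" "w' = [] \<or> hd w' \<noteq> S"
    show "Nd u t0 ts = t' \<and> w = w' \<and> us = us'"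
    proof (cases t')
      case Lf then show ?thesis using a by auto
    next
      case (Nd u' t0' ts')
      have uu: "u = u'" using a Nd by simp
      have h1: "wd t0 @ (wdl ts @ w) = wd t0' @ (wdl ts' @ w')" using a Nd by simp
      have h2: "lab t0 @ (labl ts @ us) = lab t0' @ (labl ts' @ us')" using a Nd by simp
      have n1: "wdl ts @ w = [] \<or> hd (wdl ts @ w) \<noteq> S" using a(5) by (cases ts) auto
      have n2: "wdl ts' @ w' = [] \<or> hd (wdl ts' @ w') \<noteq> S" using a(6) by (cases ts') auto
      have w0: "wft t0" "wft t0'" "wfl ts" "wfl ts'" "length ts = length ts'" using a(1,2) Nd uu by auto
      have e0: "t0 = t0' \<and> wdl ts @ w = wdl ts' @ w' \<and> labl ts @ us = labl ts' @ us'"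
        using 2(1) w0 h1 h2 n1 n2 by blast
      have "ts = ts' \<and> w = w' \<and> us = us'"
        using 2(2) w0 e0 a(5,6) by blast
      then show ?thesis using Nd uu e0 by simp
    qed
  qed
next
  case 3
  then show ?case by simp
next
  case (4 t ts)
  show ?case
  proof (intro allI impI)
    fix ts' w w' us us'
    assume a: "wfl (t # ts)" "wfl ts'" "length (t # ts) = length ts'" "wdl (t # ts) @ w = wdl ts' @ w'" "labl (t # ts) @ us = labl ts' @ us'" "w = [] \<or> hd w \<noteq> S" "w' = [] \<or> hd w' \<noteq> S"
    obtain t' ts'' where ts': "ts' = t' # ts''" using a(3) by (cases ts') auto
    have h1: "wd t @ (wdl ts @ w) = wd t' @ (wdl ts'' @ w')" using a ts' by simp
    have h2: "lab t @ (labl ts @ us) = lab t' @ (labl ts'' @ us')" using a ts' by simp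
    have n1: "wdl ts @ w = [] \<or> hd (wdl ts @ w) \<noteq> S" using a(6) by (cases ts) auto
    have n2: "wdl ts'' @ w' = [] \<or> hd (wdl ts'' @ w') \<noteq> S" using a(7) by (cases ts'') auto
    have w0: "wft t" "wft t'" "wfl ts" "wfl ts''" "length ts = length ts''" using a(1,2,3) ts' by auto
    have e0: "t = t' \<and> wdl ts @ w = wdl ts'' @ w' \<and> labl ts @ us = labl ts'' @ us'"
      using 4(1) w0 h1 h2 n1 n2 by blast
    have "ts = ts'' \<and> w = w' \<and> us = us'"
      using 4(2) w0 e0 a(6,7) by blast
    then show "t # ts = ts' \<and> w = w' \<and> us = us'" using ts' e0 by simp
  qed
qed

lemma finite_letters: "finite (UNIV :: letter set)"
proof -
  have "UNIV = {S, W}" using letter.exhaust by auto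
  then show ?thesis by (metis finite.emptyI finite.insertI)
qed

lemma finite_dyck: "finite (dyck_paths u)"
proof -
  have "dyck_paths u \<subseteq> {w. set w \<subseteq> UNIV \<and> length w = sum_list u + length u}"
    by (auto simp: dyck_paths_def)
  then show ?thesis using finite_lists_length_eq[OF finite_letters] finite_subset by blast
qed

lemma finite_perms: "finite {u. mset u = mset (k::nat list)}"
proof -
  have "{u. mset u = mset k} \<subseteq> {u. set u \<subseteq> set k \<and> length u = length k}"
    by (auto dest: mset_eq_setD mset_eq_length)
  then show ?thesis using finite_lists_length_eq[OF finite_set] finite_subset by blast
qed

theorem theorem1p2:
  fixes k :: "nat list" and q t :: "'a::comm_ring_1"
  assumes "\<forall>x \<in> set k. 0 < x"
  shows "Ctilde k q t = Ctilde k t q"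
proof -
  define U where "U = {u. mset u = mset k}"
  define P where "P = Sigma U dyck_paths"
  define Tr where "Tr = {x. wft x \<and> mset (lab x) = mset k}"
  define F where "F = (\<lambda>(a::'a) (b::'a) (p :: nat list \<times> letter list). a ^ area (fst p) (snd p) * b ^ depth (fst p) (snd p))"
  have C: "Ctilde k a b = sum (F a b) P" for a b
    unfolding Ctilde_def P_def U_def[symmetric] F_def
    by (subst sum.Sigma) (auto simp: U_def finite_perms finite_dyck split_beta)
  have bij: "bij_betw (\<lambda>x. (lab x, wd x)) Tr P"
  proof (rule bij_betwI')
    fix x y assume "x \<in> Tr" "y \<in> Tr"
    then show "((lab x, wd x) = (lab y, wd y)) = (x = y)"
      using wd_inj(1)[rule_format, of x y "[]" "[]" "[]" "[]"] by (auto simp: Tr_def)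
  next
    fix x assume "x \<in> Tr" then show "(lab x, wd x) \<in> P"
      using wd_dyck by (auto simp: Tr_def P_def U_def)
  next
    fix p assume "p \<in> P"
    then obtain u w where p: "p = (u, w)" "mset u = mset k" "w \<in> dyck_paths u" by (auto simp: P_def U_def)
    then obtain x where "wft x" "lab x = u" "wd x = w" using dyck_wd by blast
    then show "\<exists>x\<in>Tr. p = (lab x, wd x)" using p by (auto simp: Tr_def)
  qed
  have S1: "sum (F a b) P = (\<Sum>x\<in>Tr. F a b (lab x, wd x))" for a b
    using sum.reindex_bij_betw[OF bij, of "F a b"] by simp
  have bij2: "bij_betw rfl Tr Tr"
  proof (rule bij_betwI')
    fix x y show "(rfl x = rfl y) = (x = y)" by (metis rfl_rfl)
  next
    fix x assume "x \<in> Tr" then show "rfl x \<in> Tr" by (auto simp: Tr_def wft_rfl mset_lab_rfl)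
  next
    fix y assume "y \<in> Tr" then show "\<exists>x\<in>Tr. y = rfl x"
      by (intro bexI[of _ "rfl y"]) (auto simp: Tr_def wft_rfl mset_lab_rfl rfl_rfl)
  qed
  have S2: "(\<Sum>x\<in>Tr. F q t (lab x, wd x)) = (\<Sum>x\<in>Tr. F q t (lab (rfl x), wd (rfl x)))"
    using sum.reindex_bij_betw[OF bij2, of "\<lambda>x. F q t (lab x, wd x)"] by simp
  have S3: "F q t (lab (rfl x), wd (rfl x)) = F t q (lab x, wd x)" if "x \<in> Tr" for x
  proof -
    have w: "wft x" using that by (simp add: Tr_def)
    have w': "wft (rfl x)" using w by (rule wft_rfl)
    have e1: "area (lab (rfl x)) (wd (rfl x)) = depth (lab x) (wd x)"
      using area_wd[OF w'] At_rfl[OF w, of 0] depth_wd[OF w] by simp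
    have e2: "depth (lab (rfl x)) (wd (rfl x)) = area (lab x) (wd x)"
      using depth_wd[OF w'] At_rfl[OF w', of 0] area_wd[OF w] by (simp add: rfl_rfl)
    show ?thesis using e1 e2 by (simp add: F_def mult.commute)
  qed
  have "Ctilde k q t = (\<Sum>x\<in>Tr. F q t (lab (rfl x), wd (rfl x)))" using C S1 S2 by simp
  also have "\<dots> = (\<Sum>x\<in>Tr. F t q (lab x, wd x))" by (rule sum.cong) (use S3 in auto)
  also have "\<dots> = Ctilde k t q" using C S1 by simp
  finally show ?thesis .
qed

end
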